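(* The two-dimensional subalgebras of ${\rm A}_3$ are exactly $\langle e_1,e_3\rangle$, $\langle e_1-e_2,e_3\rangle$, $\langle e_1,e_2\rangle$ and $\langle e_2,e_3\rangle$; up to automorphisms of ${\rm A}_3$ every two-dimensional subalgebra is equivalent to one of these four.
   Context: ${\rm A}_3$ is the complex algebra with basis $e_1,e_2,e_3$, unit $e_1$ ($e_1e_i=e_ie_1=e_i$), and $e_2e_2=e_2$; all other products of basis elements are zero. A subalgebra is a linear subspace closed under multiplication (it need not contain $e_1$). Equivalence up to automorphisms means one is mapped onto the other by an algebra automorphism. $\langle S\rangle$ denotes linear span. *)

theory Defs
  imports Complex_Main "HOL-Library.Product_Plus"
begin

text \<open>The algebra A3 is modelled on complex triples (a1,a2,a3) = a1 e1 + a2 e2 + a3 e3.\<close>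

type_synonym A3 = "complex \<times> complex \<times> complex"

definition sA :: "complex \<Rightarrow> A3 \<Rightarrow> A3" where
  "sA c x = (c * fst x, c * fst (snd x), c * snd (snd x))"

definition e1 :: A3 where "e1 = (1, 0, 0)"
definition e2 :: A3 where "e2 = (0, 1, 0)"
definition e3 :: A3 where "e3 = (0, 0, 1)"

text \<open>Multiplication: e1 unit, e2 e2 = e2, all other products of basis elements zero.\<close>
definition mulA :: "A3 \<Rightarrow> A3 \<Rightarrow> A3" where
  "mulA x y = (case x of (a1, a2, a3) \<Rightarrow> case y of (b1, b2, b3) \<Rightarrow>
      (a1 * b1, a1 * b2 + a2 * b1 + a2 * b2, a1 * b3 + a3 * b1))"

definition subalgA :: "A3 set \<Rightarrow> bool" where
  "subalgA S \<longleftrightarrow> module.subspace sA S \<and> (\<forall>x\<in>S. \<forall>y\<in>S. mulA x y \<in> S)"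

definition spanA :: "A3 set \<Rightarrow> A3 set" where
  "spanA X = module.span sA X"

definition dimA :: "A3 set \<Rightarrow> nat" where
  "dimA S = vector_space.dim sA S"

definition autA :: "(A3 \<Rightarrow> A3) \<Rightarrow> bool" where
  "autA f \<longleftrightarrow> Vector_Spaces.linear sA sA f \<and> bij f \<and> (\<forall>x y. f (mulA x y) = mulA (f x) (f y))"

lemma vector_space_sA: "vector_space sA"
  by unfold_locales (auto simp: sA_def algebra_simps)

end

theory Submission
  imports Defs
begin

interpretation V: vector_space sA by (rule vector_space_sA)

lemma span2: "spanA {a, b} = {sA k1 a + sA k2 b | k1 k2. True}"
proof (rule set_eqI)
  fix x
  show "x \<in> spanA {a, b} \<longleftrightarrow> x \<in> {sA k1 a + sA k2 b | k1 k2. True}"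
    unfolding spanA_def V.span_insert[of a "{b}"] V.span_singleton mem_Collect_eq
  proof
    assume "\<exists>k. x - sA k a \<in> range (\<lambda>k. sA k b)"
    then obtain k k' where "x - sA k a = sA k' b" by auto
    then have "x = sA k a + sA k' b" by (metis diff_eq_eq add.commute)
    then show "\<exists>k1 k2. x = sA k1 a + sA k2 b \<and> True" by blast
  next
    assume "\<exists>k1 k2. x = sA k1 a + sA k2 b \<and> True"
    then obtain k1 k2 where "x = sA k1 a + sA k2 b" by auto
    then have "x - sA k1 a = sA k2 b" by simp
    then show "\<exists>k. x - sA k a \<in> range (\<lambda>k. sA k b)" by blast
  qed
qed

lemma sA_eq: "sA c (x1, x2, x3) = (c * x1, c * x2, c * x3)"
  by (simp add: sA_def)

definition K :: "complex \<Rightarrow> complex \<Rightarrow> complex \<Rightarrow> A3 set" where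
  "K p1 p2 p3 = {x. p1 * fst x + p2 * fst (snd x) + p3 * snd (snd x) = 0}"

lemma spanK1: "spanA {e1, e3} = K 0 1 0"
  unfolding span2 K_def e1_def e3_def
  by (auto simp: sA_def)

lemma spanK2: "spanA {e1 - e2, e3} = K 1 1 0"
  unfolding span2 K_def e1_def e2_def e3_def
  apply (auto simp: sA_def)
  apply (simp add: add_eq_0_iff)
  done

lemma spanK3: "spanA {e1, e2} = K 0 0 1"
  unfolding span2 K_def e1_def e2_def
  by (auto simp: sA_def)

lemma spanK4: "spanA {e2, e3} = K 1 0 0"
  unfolding span2 K_def e2_def e3_def
  by (auto simp: sA_def)

lemma K_scale: "c \<noteq> 0 \<Longrightarrow> K (c*p1) (c*p2) (c*p3) = K p1 p2 p3"
  unfolding K_def by (auto simp: algebra_simps simp flip: distrib_left)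

lemma K_class:
  assumes p: "(p1, p2, p3) \<noteq> 0"
    and cl: "\<forall>x\<in>K p1 p2 p3. \<forall>y\<in>K p1 p2 p3. mulA x y \<in> K p1 p2 p3"
  shows "K p1 p2 p3 \<in> {K 0 1 0, K 1 1 0, K 0 0 1, K 1 0 0}"
proof (cases "p3 = 0")
  case False
  have "(p3, 0, -p1) \<in> K p1 p2 p3" "(0, p3, -p2) \<in> K p1 p2 p3"
    unfolding K_def by (auto simp: algebra_simps)
  with cl have "mulA (p3, 0, -p1) (p3, 0, -p1) \<in> K p1 p2 p3"
    "mulA (0, p3, -p2) (0, p3, -p2) \<in> K p1 p2 p3" by blast+
  then have "p1 * p3 * p3 = 0" "p2 * p3 * p3 = 0"
    unfolding K_def mulA_def by (auto simp: algebra_simps)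
  with False have "p1 = 0" "p2 = 0" by auto
  then have "K p1 p2 p3 = K 0 0 1" using K_scale[of p3 0 0 1] False by simp
  then show ?thesis by simp
next
  case p3: True
  show ?thesis
  proof (cases "p2 = 0")
    case True
    with p p3 have "p1 \<noteq> 0" by (auto simp: zero_prod_def)
    then have "K p1 p2 p3 = K 1 0 0" using K_scale[of p1 1 0 0] True p3 by simp
    then show ?thesis by simp
  next
    case False
    have "(p2, -p1, 0) \<in> K p1 p2 p3"
      unfolding K_def by (auto simp: algebra_simps)
    with cl have "mulA (p2, -p1, 0) (p2, -p1, 0) \<in> K p1 p2 p3" by blast
    then have "p1 * p2 * (p1 - p2) = 0"
      unfolding K_def mulA_def using p3 by (auto simp: algebra_simps power2_eq_square)
    with False have "p1 = 0 \<or> p1 = p2" by auto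
    then show ?thesis
    proof
      assume "p1 = 0"
      then have "K p1 p2 p3 = K 0 1 0" using K_scale[of p2 0 1 0] False p3 by simp
      then show ?thesis by simp
    next
      assume "p1 = p2"
      then have "K p1 p2 p3 = K 1 1 0" using K_scale[of p2 1 1 0] False p3 by simp
      then show ?thesis by simp
    qed
  qed
qed

lemma cramer_aux:
  fixes p y n1 n2 s t :: complex
  shows "p \<noteq> 0 \<Longrightarrow> p * y = n1 * s + n2 * t \<Longrightarrow> (n1/p)*s + (n2/p)*t = y"
  by (simp add: field_simps)

lemma cross_K:
  assumes ind: "V.independent {u, v}" and uv: "u \<noteq> v"
  shows "\<exists>p1 p2 p3. (p1, p2, p3) \<noteq> 0 \<and> spanA {u, v} = K p1 p2 p3"
proof -
  obtain u1 u2 u3 where u: "u = (u1, u2, u3)" by (cases u) auto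
  obtain v1 v2 v3 where v: "v = (v1, v2, v3)" by (cases v) auto
  define p1 where "p1 = u2*v3 - u3*v2"
  define p2 where "p2 = u3*v1 - u1*v3"
  define p3 where "p3 = u1*v2 - u2*v1"
  have v0: "v \<noteq> 0" using ind V.dependent_zero by blast
  have nsp: "u \<notin> V.span {v}" using ind uv by (simp add: V.independent_insert)
  have pnz: "(p1, p2, p3) \<noteq> 0"
  proof
    assume "(p1, p2, p3) = 0"
    then have z: "p1 = 0" "p2 = 0" "p3 = 0" by (auto simp: zero_prod_def)
    have "\<exists>c. u = sA c v"
    proof -
      consider "v1 \<noteq> 0" | "v2 \<noteq> 0" | "v3 \<noteq> 0" using v0 v by (auto simp: zero_prod_def)
      then show ?thesis
      proof cases
        case 1
        have "u = sA (u1/v1) v" using 1 z unfolding u v sA_def p1_def p2_def p3_def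
          by (auto simp: field_simps)
        then show ?thesis by blast
      next
        case 2
        have "u = sA (u2/v2) v" using 2 z unfolding u v sA_def p1_def p2_def p3_def
          by (auto simp: field_simps)
        then show ?thesis by blast
      next
        case 3
        have "u = sA (u3/v3) v" using 3 z unfolding u v sA_def p1_def p2_def p3_def
          by (auto simp: field_simps)
        then show ?thesis by blast
      qed
    qed
    then show False using nsp by (auto simp: V.span_singleton)
  qed
  have "spanA {u, v} = K p1 p2 p3"
  proof
    show "spanA {u, v} \<subseteq> K p1 p2 p3"
      unfolding span2 K_def u v p1_def p2_def p3_def by (auto simp: sA_def algebra_simps)
  next
    show "K p1 p2 p3 \<subseteq> spanA {u, v}"
    proof
      fix x assume "x \<in> K p1 p2 p3"
      obtain x1 x2 x3 where x: "x = (x1, x2, x3)" by (cases x) auto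
      have d: "p1 * x1 + p2 * x2 + p3 * x3 = 0" using \<open>x \<in> K p1 p2 p3\<close> unfolding K_def x by simp
      have "\<exists>a b. x = sA a u + sA b v"
      proof -
        consider "p3 \<noteq> 0" | "p2 \<noteq> 0" | "p1 \<noteq> 0" using pnz by (auto simp: zero_prod_def)
        then show ?thesis
        proof cases
          case 1
          define a where "a = (x1*v2 - x2*v1)/p3"
          define b where "b = (u1*x2 - u2*x1)/p3"
          have e1: "a * u1 + b * v1 = x1"
            unfolding a_def b_def by (rule cramer_aux[OF 1]) (simp add: p3_def algebra_simps)
          have e2: "a * u2 + b * v2 = x2"
            unfolding a_def b_def by (rule cramer_aux[OF 1]) (simp add: p3_def algebra_simps)
          have e3: "a * u3 + b * v3 = x3"
            unfolding a_def b_def using d by (intro cramer_aux[OF 1]) (simp add: p1_def p2_def p3_def; algebra)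
          have "x = sA a u + sA b v" using e1 e2 e3 unfolding x u v sA_def by simp
          then show ?thesis by blast
        next
          case 2
          define a where "a = (x3*v1 - x1*v3)/p2"
          define b where "b = (u3*x1 - u1*x3)/p2"
          have e1: "a * u1 + b * v1 = x1"
            unfolding a_def b_def by (rule cramer_aux[OF 2]) (simp add: p2_def algebra_simps)
          have e2: "a * u3 + b * v3 = x3"
            unfolding a_def b_def by (rule cramer_aux[OF 2]) (simp add: p2_def algebra_simps)
          have e3: "a * u2 + b * v2 = x2"
            unfolding a_def b_def using d by (intro cramer_aux[OF 2]) (simp add: p1_def p2_def p3_def; algebra)
          have "x = sA a u + sA b v" using e1 e2 e3 unfolding x u v sA_def by simp
          then show ?thesis by blast
        next
          case 3
          define a where "a = (x2*v3 - x3*v2)/p1"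
          define b where "b = (u2*x3 - u3*x2)/p1"
          have e1: "a * u2 + b * v2 = x2"
            unfolding a_def b_def by (rule cramer_aux[OF 3]) (simp add: p1_def algebra_simps)
          have e2: "a * u3 + b * v3 = x3"
            unfolding a_def b_def by (rule cramer_aux[OF 3]) (simp add: p1_def algebra_simps)
          have e3: "a * u1 + b * v1 = x1"
            unfolding a_def b_def using d by (intro cramer_aux[OF 3]) (simp add: p1_def p2_def p3_def; algebra)
          have "x = sA a u + sA b v" using e1 e2 e3 unfolding x u v sA_def by simp
          then show ?thesis by blast
        qed
      qed
      then show "x \<in> spanA {u, v}" unfolding span2 by blast
    qed
  qed
  with pnz show ?thesis by blast
qed

lemma indep2:
  assumes "b \<noteq> 0" "\<And>k. a \<noteq> sA k b"
  shows "V.independent {a, b}" "a \<noteq> b"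
proof -
  have ib: "V.independent {b}" using assms(1)
    by (simp add: V.independent_insert V.span_empty)
  have "a \<noteq> b" using assms(2)[of 1] by (simp add: sA_def)
  moreover have "a \<notin> V.span {b}" using assms(2) by (auto simp: V.span_singleton)
  ultimately show "V.independent {a, b}" using ib by (simp add: V.independent_insert)
  show "a \<noteq> b" by fact
qed

lemma dim_two:
  assumes "b \<noteq> 0" "\<And>k. a \<noteq> sA k b"
  shows "dimA (spanA {a, b}) = 2"
  using indep2[OF assms] unfolding dimA_def spanA_def
  by (simp add: V.dim_eq_card_independent)

lemma four_dims:
  "dimA (spanA {e1, e3}) = 2" "dimA (spanA {e1 - e2, e3}) = 2"
  "dimA (spanA {e1, e2}) = 2" "dimA (spanA {e2, e3}) = 2"
  by (rule dim_two; simp add: e1_def e2_def e3_def sA_def zero_prod_def)+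

lemma subalg_K:
  assumes "S = spanA X" "\<forall>x\<in>S. \<forall>y\<in>S. mulA x y \<in> S"
  shows "subalgA S"
  using assms unfolding subalgA_def spanA_def by simp

lemma four_subalg:
  "subalgA (spanA {e1, e3})" "subalgA (spanA {e1 - e2, e3})"
  "subalgA (spanA {e1, e2})" "subalgA (spanA {e2, e3})"
  apply (rule subalg_K[OF refl]; unfold spanK1; auto simp: K_def mulA_def split: prod.splits)
  apply (rule subalg_K[OF refl]; unfold spanK2; auto simp: K_def mulA_def split: prod.splits)
  subgoal premises P for a b c d
  proof -
    have "a*c + (a*d+b*c+b*d) = (a+b)*(c+d)" by (simp add: algebra_simps)
    then show ?thesis using P by simp
  qed
  apply (rule subalg_K[OF refl]; unfold spanK3; auto simp: K_def mulA_def split: prod.splits)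
  apply (rule subalg_K[OF refl]; unfold spanK4; auto simp: K_def mulA_def split: prod.splits)
  done

lemma classify:
  assumes "subalgA S" "dimA S = 2"
  shows "S \<in> {spanA {e1, e3}, spanA {e1 - e2, e3}, spanA {e1, e2}, spanA {e2, e3}}"
proof -
  have sub: "V.subspace S" and cl: "\<forall>x\<in>S. \<forall>y\<in>S. mulA x y \<in> S"
    using assms(1) unfolding subalgA_def by auto
  obtain B where B: "B \<subseteq> S" "V.independent B" "S \<subseteq> V.span B" "card B = V.dim S"
    using V.basis_exists by blast
  then have "card B = 2" using assms(2) unfolding dimA_def by simp
  then obtain u v where uv: "B = {u, v}" "u \<noteq> v" by (auto simp: card_2_iff)
  have SB: "S = spanA {u, v}" unfolding spanA_def using V.span_subspace[OF B(1) B(3) sub] uv by simp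
  obtain p1 p2 p3 where p: "(p1, p2, p3) \<noteq> 0" "spanA {u, v} = K p1 p2 p3"
    using cross_K[of u v] B(2) uv by auto
  have "K p1 p2 p3 \<in> {K 0 1 0, K 1 1 0, K 0 0 1, K 1 0 0}"
    using K_class[OF p(1)] cl SB p(2) by simp
  then show ?thesis using SB p(2) by (simp add: spanK1 spanK2 spanK3 spanK4)
qed

lemma autA_id: "autA id"
  unfolding autA_def by (simp add: V.linear_id)

theorem mainTheorem9:
  shows "(\<forall>S. (subalgA S \<and> dimA S = 2) \<longleftrightarrow>
            S \<in> {spanA {e1, e3}, spanA {e1 - e2, e3}, spanA {e1, e2}, spanA {e2, e3}})
       \<and> (\<forall>S. subalgA S \<and> dimA S = 2 \<longrightarrow>
            (\<exists>f T. autA f \<and> T \<in> {spanA {e1, e3}, spanA {e1 - e2, e3}, spanA {e1, e2}, spanA {e2, e3}}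
                   \<and> f ` S = T))"
proof (rule conjI; intro allI impI iffI)
  fix S assume "subalgA S \<and> dimA S = 2"
  then show "S \<in> {spanA {e1, e3}, spanA {e1 - e2, e3}, spanA {e1, e2}, spanA {e2, e3}}"
    using classify by blast
next
  fix S assume "S \<in> {spanA {e1, e3}, spanA {e1 - e2, e3}, spanA {e1, e2}, spanA {e2, e3}}"
  then show "subalgA S \<and> dimA S = 2" using four_dims four_subalg by auto
next
  fix S assume "subalgA S \<and> dimA S = 2"
  then have "S \<in> {spanA {e1, e3}, spanA {e1 - e2, e3}, spanA {e1, e2}, spanA {e2, e3}}"
    using classify by blast
  then show "\<exists>f T. autA f \<and> T \<in> {spanA {e1, e3}, spanA {e1 - e2, e3}, spanA {e1, e2}, spanA {e2, e3}}
                   \<and> f ` S = T"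
    using autA_id by (intro exI[of _ id] exI[of _ S]) simp
qed

end
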